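(* Let $T_0$ be a closed, symmetric operator with dense domain in a Hilbert space $\mathcal{H}$, and suppose $T_0$ has a self-adjoint extension $T$ (with domain in $\mathcal{H}$) that has a bounded inverse $T^{-1}$ defined on all of $\mathcal{H}$. Let $X := T(T - iI)^{-1} = (I - iT^{-1})^{-1}$. Then $X$ restricts to a bijection from $(\mathrm{Ran}\, T_0)^\perp$ onto $(\mathrm{Ran}(T_0 + iI))^\perp$. In particular, $n := \dim (\mathrm{Ran}\, T_0)^\perp = \dim(\mathrm{Ran}(T_0 + iI))^\perp$, and $T_0$ has equal deficiency indices $(n,n)$.
   Context: The deficiency indices of a closed symmetric operator $T_0$ are $(n_+,n_-)$ with $n_\pm = \dim(\mathrm{Ran}(T_0 \pm iI))^\perp \in \{0,1,2,\dots\}\cup\{+\infty\}$. *)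

theory Defs
  imports "HOL-Analysis.Analysis" "HOL-Library.Extended_Nat"
begin

class complex_vector = real_vector +
  fixes scaleC :: "complex \<Rightarrow> 'a \<Rightarrow> 'a" (infixr "*\<^sub>C" 75)
  assumes scaleC_add_right: "a *\<^sub>C (x + y) = a *\<^sub>C x + a *\<^sub>C y"
    and scaleC_add_left: "(a + b) *\<^sub>C x = a *\<^sub>C x + b *\<^sub>C x"
    and scaleC_scaleC: "a *\<^sub>C (b *\<^sub>C x) = (a * b) *\<^sub>C x"
    and scaleC_one: "1 *\<^sub>C x = x"
    and scaleR_scaleC: "scaleR r = scaleC (complex_of_real r)"

class chilbert_space = complex_vector + real_normed_vector + complete_space +
  fixes cinner :: "'a \<Rightarrow> 'a \<Rightarrow> complex"
  assumes cinner_commute: "cinner x y = cnj (cinner y x)"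
    and cinner_add_left: "cinner (x + y) z = cinner x z + cinner y z"
    and cinner_scaleC_left: "cinner (r *\<^sub>C x) y = cnj r * cinner x y"
    and cinner_self_real: "Im (cinner x x) = 0"
    and cinner_self_nonneg: "0 \<le> Re (cinner x x)"
    and cinner_self_eq_zero: "cinner x x = 0 \<longleftrightarrow> x = 0"
    and norm_eq_sqrt_cinner: "norm x = sqrt (Re (cinner x x))"

definition csubspace :: "'a::complex_vector set \<Rightarrow> bool" where
  "csubspace S \<longleftrightarrow> 0 \<in> S \<and> (\<forall>x\<in>S. \<forall>y\<in>S. x + y \<in> S) \<and> (\<forall>c. \<forall>x\<in>S. c *\<^sub>C x \<in> S)"

definition cindependent :: "'a::complex_vector set \<Rightarrow> bool" where
  "cindependent B \<longleftrightarrow> (\<forall>F c. finite F \<longrightarrow> F \<subseteq> B \<longrightarrow> (\<Sum>v\<in>F. c v *\<^sub>C v) = 0 \<longrightarrow> (\<forall>v\<in>F. c v = 0))"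

definition cdim :: "'a::complex_vector set \<Rightarrow> enat" where
  "cdim S = (SUP B\<in>{B. finite B \<and> B \<subseteq> S \<and> cindependent B}. enat (card B))"

definition orth :: "'a::chilbert_space set \<Rightarrow> 'a set" where
  "orth A = {y. \<forall>x\<in>A. cinner x y = 0}"

definition lin_op :: "'a::complex_vector set \<Rightarrow> ('a \<Rightarrow> 'a) \<Rightarrow> bool" where
  "lin_op D T \<longleftrightarrow> csubspace D \<and> (\<forall>x\<in>D. \<forall>y\<in>D. T (x + y) = T x + T y)
     \<and> (\<forall>c. \<forall>x\<in>D. T (c *\<^sub>C x) = c *\<^sub>C T x)"

definition densely_defined :: "'a::chilbert_space set \<Rightarrow> bool" where
  "densely_defined D \<longleftrightarrow> closure D = UNIV"

definition closed_op :: "'a::chilbert_space set \<Rightarrow> ('a \<Rightarrow> 'a) \<Rightarrow> bool" where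
  "closed_op D T \<longleftrightarrow> closed {(x, T x) | x. x \<in> D}"

definition symmetric_op :: "'a::chilbert_space set \<Rightarrow> ('a \<Rightarrow> 'a) \<Rightarrow> bool" where
  "symmetric_op D T \<longleftrightarrow> (\<forall>x\<in>D. \<forall>y\<in>D. cinner (T x) y = cinner x (T y))"

definition adj_dom :: "'a::chilbert_space set \<Rightarrow> ('a \<Rightarrow> 'a) \<Rightarrow> 'a set" where
  "adj_dom D T = {y. \<exists>z. \<forall>x\<in>D. cinner (T x) y = cinner x z}"

definition self_adjoint_op :: "'a::chilbert_space set \<Rightarrow> ('a \<Rightarrow> 'a) \<Rightarrow> bool" where
  "self_adjoint_op D T \<longleftrightarrow> lin_op D T \<and> densely_defined D \<and> adj_dom D T = D
     \<and> (\<forall>x\<in>D. \<forall>y\<in>D. cinner (T x) y = cinner x (T y))"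

definition extends_op :: "'a set \<Rightarrow> ('a \<Rightarrow> 'a) \<Rightarrow> 'a set \<Rightarrow> ('a \<Rightarrow> 'a) \<Rightarrow> bool" where
  "extends_op D T D0 T0 \<longleftrightarrow> D0 \<subseteq> D \<and> (\<forall>x\<in>D0. T x = T0 x)"

definition bounded_clinear :: "('a::chilbert_space \<Rightarrow> 'a) \<Rightarrow> bool" where
  "bounded_clinear S \<longleftrightarrow> lin_op UNIV S \<and> (\<exists>K. \<forall>x. norm (S x) \<le> K * norm x)"

definition is_inverse_op :: "'a set \<Rightarrow> ('a \<Rightarrow> 'a) \<Rightarrow> ('a \<Rightarrow> 'a) \<Rightarrow> bool" where
  "is_inverse_op D T S \<longleftrightarrow> (\<forall>x. S x \<in> D \<and> T (S x) = x) \<and> (\<forall>x\<in>D. S (T x) = x)"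

end

theory Submission imports Defs begin

lemma scaleC_zero_left[simp]: "(0::complex) *\<^sub>C (x::'a::complex_vector) = 0"
proof -
  have "(0::complex) *\<^sub>C x = (0::real) *\<^sub>R x" by (simp add: scaleR_scaleC)
  then show ?thesis by simp
qed

lemma scaleC_zero_right[simp]: "a *\<^sub>C (0::'a::complex_vector) = 0"
proof -
  have "a *\<^sub>C (0::'a) = a *\<^sub>C 0 + a *\<^sub>C 0" by (metis add_0 scaleC_add_right)
  then show ?thesis by simp
qed

lemma scaleC_minus_left: "(- a) *\<^sub>C (x::'a::complex_vector) = - (a *\<^sub>C x)"
proof -
  have "(- a) *\<^sub>C x + a *\<^sub>C x = 0" by (simp flip: scaleC_add_left)
  then show ?thesis by (simp add: eq_neg_iff_add_eq_0)
qed

lemma scaleC_minus_right: "a *\<^sub>C (- x::'a::complex_vector) = - (a *\<^sub>C x)"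
proof -
  have "a *\<^sub>C (- x) + a *\<^sub>C x = 0" by (simp flip: scaleC_add_right)
  then show ?thesis by (simp add: eq_neg_iff_add_eq_0)
qed

lemma scaleC_diff_right: "a *\<^sub>C (x - y::'a::complex_vector) = a *\<^sub>C x - a *\<^sub>C y"
  unfolding diff_conv_add_uminus by (simp only: scaleC_add_right scaleC_minus_right)

lemma scaleC_diff_left: "(a - b) *\<^sub>C (x::'a::complex_vector) = a *\<^sub>C x - b *\<^sub>C x"
  unfolding diff_conv_add_uminus by (simp only: scaleC_add_left scaleC_minus_left)

lemma scaleC_of_real: "complex_of_real r *\<^sub>C (x::'a::complex_vector) = r *\<^sub>R x"
  by (simp add: scaleR_scaleC)

lemma cinner_add_right: "cinner x (y + z) = cinner x y + cinner (x::'a::chilbert_space) z"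
  by (subst (1 2 3) cinner_commute) (simp add: cinner_add_left)

lemma cinner_scaleC_right: "cinner x (c *\<^sub>C y) = c * cinner (x::'a::chilbert_space) y"
  by (subst (1 2) cinner_commute) (simp add: cinner_scaleC_left)

lemma cinner_zero_left[simp]: "cinner 0 (y::'a::chilbert_space) = 0"
  using cinner_scaleC_left[of 0 y y] by simp

lemma cinner_zero_right[simp]: "cinner (y::'a::chilbert_space) 0 = 0"
  using cinner_scaleC_right[of y 0 y] by simp

lemma cinner_minus_left: "cinner (- x) (y::'a::chilbert_space) = - cinner x y"
  using cinner_add_left[of "-x" x y] by (simp add: eq_neg_iff_add_eq_0)

lemma cinner_minus_right: "cinner y (- x::'a::chilbert_space) = - cinner y x"
  using cinner_add_right[of y "-x" x] by (simp add: eq_neg_iff_add_eq_0)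

lemma cinner_diff_left: "cinner (x - z) (y::'a::chilbert_space) = cinner x y - cinner z y"
  unfolding diff_conv_add_uminus by (simp only: cinner_add_left cinner_minus_left)

lemma cinner_diff_right: "cinner y (x - z::'a::chilbert_space) = cinner y x - cinner y z"
  unfolding diff_conv_add_uminus by (simp only: cinner_add_right cinner_minus_right)

lemma norm_sq_cinner: "(norm (x::'a::chilbert_space))^2 = Re (cinner x x)"
  by (simp add: norm_eq_sqrt_cinner cinner_self_nonneg)

lemma cinner_self_norm: "cinner x x = complex_of_real ((norm (x::'a::chilbert_space))^2)"
  by (simp add: norm_sq_cinner complex_eq_iff cinner_self_real)

lemma cinner_scaleR_left: "cinner (r *\<^sub>R x) (y::'a::chilbert_space) = complex_of_real r * cinner x y"
  by (simp add: scaleR_scaleC cinner_scaleC_left)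

lemma cinner_scaleR_right: "cinner y (r *\<^sub>R x::'a::chilbert_space) = complex_of_real r * cinner y x"
  by (simp add: scaleR_scaleC cinner_scaleC_right)

lemma Re_cinner_sym: "Re (cinner x (y::'a::chilbert_space)) = Re (cinner y x)"
  by (subst cinner_commute) simp

lemma norm_diff_sq: "(norm (u - v::'a::chilbert_space))^2 = (norm u)^2 - 2 * Re (cinner u v) + (norm v)^2"
  unfolding norm_sq_cinner
  by (simp add: cinner_diff_left cinner_diff_right Re_cinner_sym[of v u])


lemma lin_sum:
  fixes f :: "'a::complex_vector \<Rightarrow> 'b::complex_vector"
  assumes add: "\<And>x y. f (x + y) = f x + f y"
  shows "f (sum g F) = (\<Sum>v\<in>F. f (g v))"
proof -
  have f0: "f 0 = 0" using add[of 0 0] by simp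
  show ?thesis
  proof (cases "finite F")
    case True
    then show ?thesis by (induction F rule: finite_induct) (simp_all add: f0 add)
  next
    case False
    then show ?thesis by (simp add: f0)
  qed
qed

lemma cindependent_image:
  fixes f :: "'a::complex_vector \<Rightarrow> 'a"
  assumes add: "\<And>x y. f (x + y) = f x + f y"
    and scl: "\<And>c x. f (c *\<^sub>C x) = c *\<^sub>C f x"
    and inj: "inj f" and ind: "cindependent B"
  shows "cindependent (f ` B)"
  unfolding cindependent_def
proof (intro allI impI ballI)
  fix F c v
  assume fin: "finite F" and sub: "F \<subseteq> f ` B" and sum0: "(\<Sum>v\<in>F. c v *\<^sub>C v) = 0" and vF: "v \<in> F"
  have f0: "f 0 = 0" using add[of 0 0] by simp
  define G where "G = B \<inter> f -` F"
  have FG: "F = f ` G" using sub unfolding G_def by auto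
  have injG: "inj_on f G" using inj by (simp add: inj_on_def inj_def)
  have finG: "finite G" using fin FG injG finite_image_iff by metis
  have "(\<Sum>v\<in>F. c v *\<^sub>C v) = (\<Sum>w\<in>G. c (f w) *\<^sub>C f w)"
    unfolding FG by (simp add: sum.reindex[OF injG])
  also have "\<dots> = f (\<Sum>w\<in>G. c (f w) *\<^sub>C w)"
    by (simp add: lin_sum[of f, OF add] scl)
  finally have "f (\<Sum>w\<in>G. c (f w) *\<^sub>C w) = f 0" using sum0 f0 by simp
  then have "(\<Sum>w\<in>G. c (f w) *\<^sub>C w) = 0" using inj by (simp add: inj_def)
  then have "\<forall>w\<in>G. c (f w) = 0"
  proof -
    have "G \<subseteq> B" unfolding G_def by blast
    then show ?thesis using ind[unfolded cindependent_def, rule_format, of G "\<lambda>w. c (f w)"] finG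
      \<open>(\<Sum>w\<in>G. c (f w) *\<^sub>C w) = 0\<close> by simp
  qed
  then show "c v = 0" using vF FG by auto
qed

lemma cdim_image_le:
  fixes f :: "'a::complex_vector \<Rightarrow> 'a"
  assumes add: "\<And>x y. f (x + y) = f x + f y"
    and scl: "\<And>c x. f (c *\<^sub>C x) = c *\<^sub>C f x"
    and inj: "inj f"
  shows "cdim A \<le> cdim (f ` A)"
  unfolding cdim_def
proof (rule SUP_least)
  fix B assume "B \<in> {B. finite B \<and> B \<subseteq> A \<and> cindependent B}"
  then have B: "finite B" "B \<subseteq> A" "cindependent B" by auto
  have m: "f ` B \<in> {B. finite B \<and> B \<subseteq> f ` A \<and> cindependent B}"
    using B(1,2) cindependent_image[OF add scl inj B(3)] finite_imageI[OF B(1)] by blast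
  have c: "card (f ` B) = card B" using inj by (simp add: card_image inj_on_def inj_def)
  have "enat (card (f ` B)) \<le> (SUP B\<in>{B. finite B \<and> B \<subseteq> f ` A \<and> cindependent B}. enat (card B))"
    by (rule SUP_upper[OF m])
  then show "enat (card B) \<le> (SUP B\<in>{B. finite B \<and> B \<subseteq> f ` A \<and> cindependent B}. enat (card B))"
    by (simp only: c)
qed

lemma cdim_bij_image:
  fixes f :: "'a::complex_vector \<Rightarrow> 'a"
  assumes add: "\<And>x y. f (x + y) = f x + f y"
    and scl: "\<And>c x. f (c *\<^sub>C x) = c *\<^sub>C f x"
    and bij: "bij f"
  shows "cdim (f ` A) = cdim A"
proof -
  let ?g = "inv f"
  have fg: "\<And>x. f (?g x) = x" using bij by (simp add: bij_is_surj surj_f_inv_f)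
  have gf: "\<And>x. ?g (f x) = x" using bij by (simp add: bij_is_inj)
  have gadd: "?g (x + y) = ?g x + ?g y" for x y
  proof -
    have "?g (x + y) = ?g (f (?g x + ?g y))" by (simp add: add fg)
    then show ?thesis by (simp add: gf)
  qed
  have gscl: "?g (c *\<^sub>C x) = c *\<^sub>C ?g x" for c x
  proof -
    have "?g (c *\<^sub>C x) = ?g (f (c *\<^sub>C ?g x))" by (simp add: scl fg)
    then show ?thesis by (simp add: gf)
  qed
  have ginj: "inj ?g" by (rule injI) (metis fg)
  have "cdim (f ` A) \<le> cdim (?g ` (f ` A))" by (rule cdim_image_le[OF gadd gscl ginj])
  moreover have "?g ` (f ` A) = A" by (simp add: image_image gf)
  ultimately show ?thesis using cdim_image_le[OF add scl bij_is_inj[OF bij], of A] by simp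
qed


locale symop =
  fixes S :: "'a::chilbert_space \<Rightarrow> 'a" and K :: real
  assumes Sadd: "\<And>x y. S (x + y) = S x + S y"
    and Sscl: "\<And>c x. S (c *\<^sub>C x) = c *\<^sub>C S x"
    and Ssym: "\<And>u v. cinner (S u) v = cinner u (S v)"
    and Sbnd: "\<And>x. norm (S x) \<le> K * norm x"
    and Kpos: "0 \<le> K"
begin

lemma S0: "S 0 = 0" using Sadd[of 0 0] by simp

lemma Sminus: "S (- x) = - S x"
  using Sadd[of "-x" x] S0 by (simp add: eq_neg_iff_add_eq_0)

lemma Sdiff: "S (x - y) = S x - S y"
  unfolding diff_conv_add_uminus by (simp only: Sadd Sminus)

definition Y :: "complex \<Rightarrow> 'a \<Rightarrow> 'a" where "Y s x = x - s *\<^sub>C S x"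

lemma Y_add: "Y s (x + y) = Y s x + Y s y"
  unfolding Y_def by (simp add: Sadd scaleC_add_right algebra_simps)

lemma Y_scl: "Y s (c *\<^sub>C x) = c *\<^sub>C Y s x"
  unfolding Y_def by (simp add: Sscl scaleC_scaleC scaleC_diff_right mult.commute)

lemma Y_diff: "Y s (x - y) = Y s x - Y s y"
  unfolding Y_def by (simp add: Sdiff scaleC_diff_right algebra_simps)

lemma Im_cinner_S: "Im (cinner x (S x)) = 0"
proof -
  have "cinner x (S x) = cnj (cinner x (S x))"
    by (metis cinner_commute Ssym)
  then show ?thesis by (metis Reals_cnj_iff complex_is_Real_iff)
qed

lemma Y_zero:
  assumes s: "s = \<i> \<or> s = - \<i>" and "Y s x = 0"
  shows "x = 0"
proof -
  have "x = s *\<^sub>C S x" using assms(2) unfolding Y_def by simp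
  then have "cinner x x = s * cinner x (S x)" by (metis cinner_scaleC_right)
  then have "Re (cinner x x) = 0" using s Im_cinner_S[of x] by auto
  then have "norm x = 0" by (simp add: norm_eq_sqrt_cinner)
  then show ?thesis by simp
qed

lemma Y_inj: assumes s: "s = \<i> \<or> s = - \<i>" shows "inj (Y s)"
proof (rule injI)
  fix x y assume "Y s x = Y s y"
  then have "Y s (x - y) = 0" by (simp add: Y_diff)
  then have "x - y = 0" by (rule Y_zero[OF s])
  then show "x = y" by simp
qed

abbreviation A :: "'a \<Rightarrow> 'a" where "A x \<equiv> x + S (S x)"

lemma YY: assumes s: "s = \<i> \<or> s = - \<i>" shows "Y (- s) (Y s x) = A x"
proof -
  have ss: "s * s = -1" using s by auto
  have "Y (- s) (Y s x) = (x - s *\<^sub>C S x) + s *\<^sub>C (S x - s *\<^sub>C S (S x))"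
    unfolding Y_def by (simp add: Sdiff Sscl scaleC_minus_left)
  also have "\<dots> = x - (s * s) *\<^sub>C S (S x)"
    by (simp add: scaleC_diff_right scaleC_scaleC)
  also have "\<dots> = A x" using ss by (simp add: scaleC_minus_left scaleC_one)
  finally show ?thesis .
qed

lemma A_diff: "A (x - y) = A x - A y"
  by (simp add: Sdiff)

lemma Re_cinner_A: "Re (cinner d (A d)) = (norm d)^2 + (norm (S d))^2"
proof -
  have "cinner d (A d) = cinner d d + cinner (S d) (S d)"
    by (simp add: cinner_add_right Ssym)
  then show ?thesis by (simp add: norm_sq_cinner)
qed

lemma norm_A: "norm (A d) \<le> (1 + K * K) * norm d"
proof -
  have "norm (A d) \<le> norm d + norm (S (S d))" by (rule norm_triangle_ineq)
  also have "norm (S (S d)) \<le> K * norm (S d)" by (rule Sbnd)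
  also have "K * norm (S d) \<le> K * (K * norm d)" using Sbnd Kpos by (simp add: mult_left_mono)
  finally show ?thesis by (simp add: algebra_simps)
qed

lemma contraction:
  fixes w :: 'a
  defines "c \<equiv> 1 + K * K"
  defines "l \<equiv> 1 / (c * c)"
  defines "G \<equiv> (\<lambda>x. x - l *\<^sub>R (A x - w))"
  shows "dist (G x) (G y) \<le> sqrt (1 - l) * dist x y"
proof -
  have c1: "c \<ge> 1" unfolding c_def using Kpos by simp
  have l0: "0 < l" "l \<le> 1" using c1 mult_mono[OF c1 c1] unfolding l_def by (auto simp: field_simps)
  have lc: "l * (c * c) = 1" using c1 unfolding l_def by simp
  define d where "d = x - y"
  have GG: "G x - G y = d - l *\<^sub>R A d"
    unfolding G_def d_def A_diff by (simp add: algebra_simps)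
  let ?p = "(norm d)^2"
  have "(norm (d - l *\<^sub>R A d))^2 = ?p - 2 * Re (cinner d (l *\<^sub>R A d)) + (norm (l *\<^sub>R A d))^2"
    by (rule norm_diff_sq)
  also have "Re (cinner d (l *\<^sub>R A d)) = l * ((norm d)^2 + (norm (S d))^2)"
    by (simp add: cinner_scaleR_right Re_cinner_A)
  also have "(norm (l *\<^sub>R A d))^2 = l * l * (norm (A d))^2"
    using l0 by (simp add: power2_eq_square)
  finally have eq: "(norm (d - l *\<^sub>R A d))^2 = ?p - 2 * (l * ((norm d)^2 + (norm (S d))^2)) + l * l * (norm (A d))^2" .
  have "(norm (A d))^2 \<le> ((1 + K * K) * norm d)^2"
    by (rule power_mono[OF norm_A]) simp
  then have "(norm (A d))^2 \<le> c * c * ?p" unfolding c_def by (simp add: power2_eq_square algebra_simps)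
  then have "l * l * (norm (A d))^2 \<le> l * l * (c * c * ?p)" using l0 by (simp add: mult_left_mono)
  also have "l * l * (c * c * ?p) = (l * (c * c)) * (l * ?p)" by (simp only: mult_ac)
  also have "\<dots> = l * ?p" by (simp only: lc mult_1)
  finally have b1: "l * l * (norm (A d))^2 \<le> l * ?p" .
  have b2: "0 \<le> l * (norm (S d))^2" using l0 by simp
  have eq': "(norm (d - l *\<^sub>R A d))^2 = ?p - 2 * (l * ?p) - 2 * (l * (norm (S d))^2) + l * l * (norm (A d))^2"
    using eq by (simp only: distrib_left right_diff_distrib diff_add_eq_diff_diff_swap)
  have "(norm (d - l *\<^sub>R A d))^2 \<le> ?p - 2 * (l * ?p) + l * ?p"
    using eq' b1 b2 by linarith
  also have "\<dots> = (sqrt (1 - l) * norm d)^2" using l0 by (simp add: power_mult_distrib algebra_simps)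
  finally have "norm (d - l *\<^sub>R A d) \<le> sqrt (1 - l) * norm d"
    by (rule power2_le_imp_le) (use l0 in simp)
  then show ?thesis using GG by (simp add: dist_norm d_def)
qed

lemma Y_surj: assumes s: "s = \<i> \<or> s = - \<i>" shows "surj (Y s)"
proof -
  {
    fix y
    define c where "c = 1 + K * K"
    define l where "l = 1 / (c * c)"
    define w where "w = Y (- s) y"
    define G where "G = (\<lambda>x. x - l *\<^sub>R (A x - w))"
    have c1: "c \<ge> 1" unfolding c_def using Kpos by simp
    have l0: "0 < l" "l \<le> 1" using c1 mult_mono[OF c1 c1] unfolding l_def by (auto simp: field_simps)
    have "\<exists>!x. G x = x"
    proof (rule banach_fix_type)
      show "0 \<le> sqrt (1 - l)" using l0 by simp
      show "sqrt (1 - l) < 1" using l0 by simp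
      show "\<forall>x y. dist (G x) (G y) \<le> sqrt (1 - l) * dist x y"
        by (intro allI) (unfold G_def l_def c_def, rule contraction)
    qed
    then obtain x where "G x = x" by blast
    then have "l *\<^sub>R (A x - w) = 0" unfolding G_def by simp
    then have "A x = w" using l0 by simp
    then have "Y (- s) (Y s x) = Y (- s) y" unfolding w_def using YY[OF s] by simp
    moreover have "inj (Y (- s))" using Y_inj s by auto
    ultimately have "y = Y s x" by (simp add: inj_def)
    then have "y \<in> range (Y s)" by blast
  }
  then show ?thesis by blast
qed

lemma Y_bij: assumes s: "s = \<i> \<or> s = - \<i>" shows "bij (Y s)"
  using Y_inj[OF s] Y_surj[OF s] by (simp add: bij_def)

end

theorem mainTheorem7:
  fixes D0 D :: "'a::chilbert_space set"
    and T0 T Tinv :: "'a \<Rightarrow> 'a"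
  assumes "lin_op D0 T0" and "densely_defined D0" and "closed_op D0 T0"
    and "symmetric_op D0 T0"
    and "self_adjoint_op D T" and "extends_op D T D0 T0"
    and "bounded_clinear Tinv" and "is_inverse_op D T Tinv"
  defines "X \<equiv> inv (\<lambda>x. x - \<i> *\<^sub>C Tinv x)"
  shows "bij_betw X (orth (T0 ` D0)) (orth ((\<lambda>x. T0 x + \<i> *\<^sub>C x) ` D0))
    \<and> cdim (orth (T0 ` D0)) = cdim (orth ((\<lambda>x. T0 x + \<i> *\<^sub>C x) ` D0))
    \<and> cdim (orth ((\<lambda>x. T0 x + \<i> *\<^sub>C x) ` D0)) = cdim (orth ((\<lambda>x. T0 x - \<i> *\<^sub>C x) ` D0))"
proof -
  have inv1: "\<And>x. Tinv x \<in> D" "\<And>x. T (Tinv x) = x"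
    using assms(8) unfolding is_inverse_op_def by auto
  have Tsym: "\<And>x y. x \<in> D \<Longrightarrow> y \<in> D \<Longrightarrow> cinner (T x) y = cinner x (T y)"
    using assms(5) unfolding self_adjoint_op_def by auto
  have ext: "D0 \<subseteq> D" "\<And>x. x \<in> D0 \<Longrightarrow> T x = T0 x"
    using assms(6) unfolding extends_op_def by auto
  have linS: "lin_op UNIV Tinv" and "\<exists>K. \<forall>x. norm (Tinv x) \<le> K * norm x"
    using assms(7) unfolding bounded_clinear_def by auto
  then obtain K where K: "\<And>x. norm (Tinv x) \<le> K * norm x" by blast
  have K': "norm (Tinv x) \<le> max K 0 * norm x" for x
    by (rule order_trans[OF K]) (simp add: mult_right_mono)
  have Sadd: "\<And>x y. Tinv (x + y) = Tinv x + Tinv y" and Sscl: "\<And>c x. Tinv (c *\<^sub>C x) = c *\<^sub>C Tinv x"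
    using linS unfolding lin_op_def by auto
  have Ssym: "cinner (Tinv u) v = cinner u (Tinv v)" for u v
  proof -
    have "cinner (Tinv u) v = cinner (Tinv u) (T (Tinv v))" by (simp add: inv1)
    also have "\<dots> = cinner (T (Tinv u)) (Tinv v)" by (rule Tsym[OF inv1(1) inv1(1), symmetric])
    also have "\<dots> = cinner u (Tinv v)" by (simp add: inv1)
    finally show ?thesis .
  qed
  interpret symop Tinv "max K 0"
    by unfold_locales (auto simp: Sadd Sscl Ssym K')
  have key: "cinner (T0 x) (Y s z) = cinner (T0 x + (- cnj s) *\<^sub>C x) z" if x: "x \<in> D0" for x s z
  proof -
    have "cinner (T0 x) (Tinv z) = cinner (T x) (Tinv z)" using ext x by simp
    also have "\<dots> = cinner x (T (Tinv z))" by (rule Tsym[OF subsetD[OF ext(1) x] inv1(1)])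
    also have "\<dots> = cinner x z" by (simp add: inv1)
    finally have e: "cinner (T0 x) (Tinv z) = cinner x z" .
    show ?thesis unfolding Y_def
      by (simp add: cinner_diff_right cinner_scaleC_right cinner_add_left cinner_scaleC_left e)
  qed
  have orth_iff: "Y s z \<in> orth (T0 ` D0) \<longleftrightarrow> z \<in> orth ((\<lambda>x. T0 x + (- cnj s) *\<^sub>C x) ` D0)" for s z
    unfolding orth_def using key by auto
  have img: "Y s ` orth ((\<lambda>x. T0 x + (- cnj s) *\<^sub>C x) ` D0) = orth (T0 ` D0)"
    if s: "s = \<i> \<or> s = - \<i>" for s
  proof
    show "Y s ` orth ((\<lambda>x. T0 x + (- cnj s) *\<^sub>C x) ` D0) \<subseteq> orth (T0 ` D0)"
      using orth_iff by blast
    show "orth (T0 ` D0) \<subseteq> Y s ` orth ((\<lambda>x. T0 x + (- cnj s) *\<^sub>C x) ` D0)"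
    proof
      fix w assume w: "w \<in> orth (T0 ` D0)"
      obtain z where "w = Y s z" using Y_surj[OF s] by (metis surjD)
      then show "w \<in> Y s ` orth ((\<lambda>x. T0 x + (- cnj s) *\<^sub>C x) ` D0)"
        using w orth_iff by blast
    qed
  qed
  have fplus: "(\<lambda>x. T0 x + (- cnj \<i>) *\<^sub>C x) = (\<lambda>x. T0 x + \<i> *\<^sub>C x)" by simp
  have fminus: "(\<lambda>x. T0 x + (- cnj (- \<i>)) *\<^sub>C x) = (\<lambda>x. T0 x - \<i> *\<^sub>C x)"
    by (simp add: scaleC_minus_left)
  have imgP: "Y \<i> ` orth ((\<lambda>x. T0 x + \<i> *\<^sub>C x) ` D0) = orth (T0 ` D0)"
    using img[of \<i>] fplus by simp
  have imgM: "Y (- \<i>) ` orth ((\<lambda>x. T0 x - \<i> *\<^sub>C x) ` D0) = orth (T0 ` D0)"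
    using img[of "- \<i>", unfolded fminus] by simp
  have bijP: "bij (Y \<i>)" and bijM: "bij (Y (- \<i>))" using Y_bij by auto
  have XY: "X = inv (Y \<i>)" unfolding X_def Y_def[abs_def] by simp
  have bX: "bij_betw X (orth (T0 ` D0)) (orth ((\<lambda>x. T0 x + \<i> *\<^sub>C x) ` D0))"
    unfolding bij_betw_def
  proof
    show "inj_on X (orth (T0 ` D0))"
      unfolding XY using bij_imp_bij_inv[OF bijP] bij_is_inj inj_on_subset by blast
    show "X ` orth (T0 ` D0) = orth ((\<lambda>x. T0 x + \<i> *\<^sub>C x) ` D0)"
      unfolding XY imgP[symmetric] image_image using bij_is_inj[OF bijP] by simp
  qed
  have c1: "cdim (orth (T0 ` D0)) = cdim (orth ((\<lambda>x. T0 x + \<i> *\<^sub>C x) ` D0))"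
    using cdim_bij_image[OF Y_add Y_scl bijP] imgP by metis
  have c2: "cdim (orth (T0 ` D0)) = cdim (orth ((\<lambda>x. T0 x - \<i> *\<^sub>C x) ` D0))"
    using cdim_bij_image[OF Y_add Y_scl bijM] imgM by metis
  show ?thesis using bX c1 c2 by simp
qed

end
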